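(* Let $F$ be quadratic and assume (A1), (A2). Let $\mathbf C=1$ for \texttt{MCM} and $\mathbf C=N$ for \texttt{Rand-MCM} (as in the context). Then for any $k\ge1$, $$\mathbb{E}\Big[\Big\|\frac1N\sum_{i=1}^N\nabla F(\widehat w^i_{k-1})-\nabla F(w_{k-1})\Big\|^2\,\Big|\,w_{k-1}\Big]\le\frac{L^2\omega_{\mathrm{dwn}}}{\mathbf C}\cdot\frac1N\sum_{i=1}^N\|w_{k-1}-H^i_{k-2}\|^2.$$
   Context: $N\ge1$ homogeneous workers, objective $F:\mathbb{R}^d\to\mathbb{R}$. $F$ is quadratic: there are a symmetric matrix $A$ and a point $w_*$ with $F(w)-F(w_* )=\frac12(w-w_* )^\top A(w-w_* )$. Worker $i$ at iteration $k$ has an oracle $g_k^i$ with $\mathbb{E}[g_k^i(w)]=\nabla F(w)$; all compressions use fresh independent randomness. \texttt{Rand-MCM} with step $\gamma$, rate $\alpha_{\mathrm{dwn}}$: $H^i_{-1}=w_0$, $\widehat w_0^i=w_0$; for $k\ge1$: $w_k=w_{k-1}-\gamma\frac1N\sum_i\mathcal{C}_{\mathrm{up}}(g_k^i(\widehat w^i_{k-1}))$, $\widehat w^i_k=H^i_{k-1}+\mathcal{C}_{\mathrm{dwn},i}(w_k-H^i_{k-1})$, $H^i_k=H^i_{k-1}+\alpha_{\mathrm{dwn}}\mathcal{C}_{\mathrm{dwn},i}(w_k-H^i_{k-1})$ (same realization), with $\mathcal{C}_{\mathrm{dwn},1},\dots,\mathcal{C}_{\mathrm{dwn},N}$ mutually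 independent. \texttt{MCM} is the same with a single shared memory $H_k^i=H_k$ and a single downlink compression shared by all workers, so $\widehat w^i_k=\widehat w_k$ for all $i$. $\mathbb{E}[\cdot\mid w_{k-1}]$ is the conditional expectation given all randomness up to the computation of $w_{k-1}$ (so $H^i_{k-2}$ is measurable). (A1) for some $\omega_{\mathrm{up}},\omega_{\mathrm{dwn}}>0$, all $w$: unbiased compressions with $\mathbb{E}\|\mathcal{C}(w)-w\|^2\le\omega\|w\|^2$ for the respective $\omega$. (A2) $F$ is $L$-smooth. *)

theory Defs
  imports "HOL-Probability.Probability"
begin

text \<open>An unbiased random compression operator with variance parameter omega
  (assumption (A1)): the randomness lives in a probability space M, and
  C s w is the compression of w under the random outcome s.\<close>
definition unbiased_compressor ::
  "'s measure \<Rightarrow> ('s \<Rightarrow> 'a::euclidean_space \<Rightarrow> 'a) \<Rightarrow> real \<Rightarrow> bool" where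
  "unbiased_compressor M C om \<longleftrightarrow>
     prob_space M \<and>
     (\<forall>w. integrable M (\<lambda>s. C s w) \<and>
          (\<integral>s. C s w \<partial>M) = w \<and>
          integrable M (\<lambda>s. (norm (C s w - w))\<^sup>2) \<and>
          (\<integral>s. (norm (C s w - w))\<^sup>2 \<partial>M) \<le> om * (norm w)\<^sup>2)"

definition L_smooth_grad :: "('a::euclidean_space \<Rightarrow> 'a) \<Rightarrow> real \<Rightarrow> bool" where
  "L_smooth_grad g L \<longleftrightarrow> (\<forall>x y. norm (g x - g y) \<le> L * norm (x - y))"

end

theory Submission
  imports Defs
begin

lemma prod_two_delta:
  fixes a b :: real
  assumes "finite I" "i \<in> I" "j \<in> I" "i \<noteq> j"
  shows "(\<Prod>k\<in>I. if k = i then a else if k = j then b else 1) = a * b"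
proof -
  have "(\<Prod>k\<in>I. if k = i then a else if k = j then b else 1)
      = (if i = i then a else if i = j then b else 1) * (\<Prod>k\<in>I - {i}. if k = i then a else if k = j then b else 1)"
    using assms by (simp add: prod.remove)
  also have "(\<Prod>k\<in>I - {i}. if k = i then a else if k = j then b else 1) = (\<Prod>k\<in>I - {i}. if k = j then b else 1)"
    by (rule prod.cong) auto
  also have "\<dots> = b" using assms by (simp add: prod.delta)
  finally show ?thesis by simp
qed

lemma cross_lemma:
  fixes M :: "nat \<Rightarrow> 's measure" and X :: "nat \<Rightarrow> 's \<Rightarrow> 'a::euclidean_space"
  assumes P: "\<And>i. prob_space (M i)"
    and intX: "\<And>i. i < N \<Longrightarrow> integrable (M i) (X i)"
    and intN: "\<And>i. i < N \<Longrightarrow> integrable (M i) (\<lambda>s. (norm (X i s))\<^sup>2)"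
    and mean0: "\<And>i. i < N \<Longrightarrow> (\<integral>s. X i s \<partial>M i) = 0"
    and ij: "i < N" "j < N"
  shows "integrable (PiM {..<N} M) (\<lambda>\<omega>. X i (\<omega> i) \<bullet> X j (\<omega> j)) \<and>
    (\<integral>\<omega>. X i (\<omega> i) \<bullet> X j (\<omega> j) \<partial>PiM {..<N} M) = (if i = j then (\<integral>s. (norm (X i s))\<^sup>2 \<partial>M i) else 0)"
proof -
  have FM: "\<And>k. finite_measure (M k)" using P unfolding prob_space_def by blast
  interpret product_sigma_finite M
    unfolding product_sigma_finite_def using P prob_space_imp_sigma_finite by blast
  show ?thesis
  proof (cases "i = j")
    case True
    define f where "f = (\<lambda>k x. if k = i then (norm (X i x))\<^sup>2 else 1)"
    have intf: "integrable (M k) (f k)" if "k \<in> {..<N}" for k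
      using intN[of i] ij that finite_measure.integrable_const[OF FM[of k]] unfolding f_def
      by (cases "k = i") auto
    have eq: "(\<Prod>k\<in>{..<N}. f k (\<omega> k)) = X i (\<omega> i) \<bullet> X j (\<omega> j)" for \<omega>
      using ij True unfolding f_def by (simp add: prod.delta power2_norm_eq_inner if_distrib cong: if_cong)
    have "integrable (PiM {..<N} M) (\<lambda>\<omega>. \<Prod>k\<in>{..<N}. f k (\<omega> k))"
      by (rule product_integrable_prod) (use intf in auto)
    moreover have "(\<integral>\<omega>. (\<Prod>k\<in>{..<N}. f k (\<omega> k)) \<partial>PiM {..<N} M) = (\<Prod>k\<in>{..<N}. integral\<^sup>L (M k) (f k))"
      by (rule product_integral_prod) (use intf in auto)
    moreover have "(\<Prod>k\<in>{..<N}. integral\<^sup>L (M k) (f k)) = (\<integral>s. (norm (X i s))\<^sup>2 \<partial>M i)"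
    proof -
      have "(\<Prod>k\<in>{..<N}. integral\<^sup>L (M k) (f k)) = (\<Prod>k\<in>{..<N}. if k = i then (\<integral>s. (norm (X i s))\<^sup>2 \<partial>M i) else 1)"
        by (rule prod.cong) (auto simp: f_def prob_space.prob_space[OF P] finite_measure.integrable_const[OF FM])
      then show ?thesis using ij by (simp add: prod.delta)
    qed
    ultimately show ?thesis using eq True by simp
  next
    case False
    have trm: "integrable (PiM {..<N} M) (\<lambda>\<omega>. (X i (\<omega> i) \<bullet> b) * (X j (\<omega> j) \<bullet> b)) \<and>
       (\<integral>\<omega>. (X i (\<omega> i) \<bullet> b) * (X j (\<omega> j) \<bullet> b) \<partial>PiM {..<N} M) = 0" for b
    proof -
      define f where "f = (\<lambda>k x. if k = i then X i x \<bullet> b else if k = j then X j x \<bullet> b else 1)"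
      have intf: "integrable (M k) (f k)" if "k \<in> {..<N}" for k
        using intX ij that finite_measure.integrable_const[OF FM[of k]] unfolding f_def
        by (cases "k = i"; cases "k = j") (auto intro!: integrable_inner_left)
      have eq: "(\<Prod>k\<in>{..<N}. f k (\<omega> k)) = (X i (\<omega> i) \<bullet> b) * (X j (\<omega> j) \<bullet> b)" for \<omega>
      proof -
        have "(\<Prod>k\<in>{..<N}. f k (\<omega> k)) = (\<Prod>k\<in>{..<N}. if k = i then X i (\<omega> i) \<bullet> b else if k = j then X j (\<omega> j) \<bullet> b else 1)"
          by (rule prod.cong) (auto simp: f_def)
        then show ?thesis using prod_two_delta[of "{..<N}" i j] ij False by simp
      qed
      have "integrable (PiM {..<N} M) (\<lambda>\<omega>. \<Prod>k\<in>{..<N}. f k (\<omega> k))"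
        by (rule product_integrable_prod) (use intf in auto)
      moreover have "(\<integral>\<omega>. (\<Prod>k\<in>{..<N}. f k (\<omega> k)) \<partial>PiM {..<N} M) = (\<Prod>k\<in>{..<N}. integral\<^sup>L (M k) (f k))"
        by (rule product_integral_prod) (use intf in auto)
      moreover have "integral\<^sup>L (M i) (f i) = 0"
        using intX[of i] mean0[of i] ij unfolding f_def by simp
      moreover have "(\<Prod>k\<in>{..<N}. integral\<^sup>L (M k) (f k)) = 0"
        using calculation(3) ij by (meson finite_lessThan lessThan_iff prod_zero)
      ultimately show ?thesis using eq by simp
    qed
    have sumeq: "X i (\<omega> i) \<bullet> X j (\<omega> j) = (\<Sum>b\<in>Basis. (X i (\<omega> i) \<bullet> b) * (X j (\<omega> j) \<bullet> b))" for \<omega>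
      by (rule euclidean_inner)
    show ?thesis
      unfolding sumeq using trm False by (auto intro!: integrable_sum simp: integral_sum)
  qed
qed
theorem mainTheorem10:
  fixes F :: "'a::euclidean_space \<Rightarrow> real"
    and gradF :: "'a \<Rightarrow> 'a"
    and A :: "'a \<Rightarrow> 'a" and wstar :: 'a
    and L omega_dwn :: real and N :: nat
    and w :: 'a
    and H :: "nat \<Rightarrow> 'a"
    and M :: "nat \<Rightarrow> 's measure" and C :: "nat \<Rightarrow> 's \<Rightarrow> 'a \<Rightarrow> 'a"
    and Hs :: 'a
    and Ms :: "'t measure" and Cs :: "'t \<Rightarrow> 'a \<Rightarrow> 'a"
  assumes N_pos: "N \<ge> 1"
    and A_lin: "linear A"
    and A_sym: "\<forall>x y. A x \<bullet> y = x \<bullet> A y"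
    and F_quad: "\<forall>v. F v - F wstar = 1/2 * ((v - wstar) \<bullet> A (v - wstar))"
    and grad: "\<forall>x. (F has_derivative (\<lambda>h. gradF x \<bullet> h)) (at x)"
    and smooth: "L_smooth_grad gradF L"
    and om_pos: "omega_dwn > 0"
    and comp_rand: "\<forall>i<N. unbiased_compressor (M i) (C i) omega_dwn"
    and comp_shared: "unbiased_compressor Ms Cs omega_dwn"
  shows
    \<comment> \<open>Rand-MCM: independent downlink compressions, one memory per worker (bold C = N)\<close>
    "((\<integral>\<omega>. (norm ((1 / real N) *\<^sub>R (\<Sum>i<N. gradF (H i + C i (\<omega> i) (w - H i))) - gradF w))\<^sup>2
        \<partial>(PiM {..<N} M))
      \<le> L\<^sup>2 * omega_dwn / real N * ((1 / real N) * (\<Sum>i<N. (norm (w - H i))\<^sup>2)))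
    \<and>
    \<comment> \<open>MCM: one shared memory and one shared downlink compression (bold C = 1)\<close>
    ((\<integral>s. (norm ((1 / real N) *\<^sub>R (\<Sum>i<N. gradF (Hs + Cs s (w - Hs))) - gradF w))\<^sup>2 \<partial>Ms)
      \<le> L\<^sup>2 * omega_dwn / 1 * ((1 / real N) * (\<Sum>i<N. (norm (w - Hs))\<^sup>2)))"
proof -
  have Ablin: "bounded_linear A" using A_lin linear_conv_bounded_linear by auto
  have gradA: "gradF x = A (x - wstar)" for x
  proof -
    have Feq: "F = (\<lambda>v. F wstar + 1/2 * ((v - wstar) \<bullet> A (v - wstar)))"
      by (rule ext) (metis F_quad add.commute diff_add_cancel)
    have f1: "((\<lambda>v. v - wstar) has_derivative (\<lambda>h. h)) (at x)"
      using has_derivative_diff[OF has_derivative_ident has_derivative_const] by fastforce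
    have f2: "((\<lambda>v. A (v - wstar)) has_derivative (\<lambda>h. A h)) (at x)"
      using bounded_linear.has_derivative[OF Ablin f1] .
    have d1: "((\<lambda>v. (v - wstar) \<bullet> A (v - wstar)) has_derivative
        (\<lambda>h. (x - wstar) \<bullet> A h + h \<bullet> A (x - wstar))) (at x)"
      using has_derivative_inner[OF f1 f2] .
    have d0: "((\<lambda>v. F wstar + 1/2 * ((v - wstar) \<bullet> A (v - wstar))) has_derivative
        (\<lambda>h. 0 + 1/2 * ((x - wstar) \<bullet> A h + h \<bullet> A (x - wstar)))) (at x)"
      by (intro has_derivative_add has_derivative_const has_derivative_mult_right d1)
    have "(\<lambda>h. 0 + 1/2 * ((x - wstar) \<bullet> A h + h \<bullet> A (x - wstar))) = (\<lambda>h. A (x - wstar) \<bullet> h)"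
    proof
      fix h
      have "(x - wstar) \<bullet> A h = A (x - wstar) \<bullet> h" using A_sym by metis
      then show "0 + 1/2 * ((x - wstar) \<bullet> A h + h \<bullet> A (x - wstar)) = A (x - wstar) \<bullet> h"
        by (simp add: inner_commute)
    qed
    with d0 Feq have d: "(F has_derivative (\<lambda>h. A (x - wstar) \<bullet> h)) (at x)" by simp
    have "(\<lambda>h. gradF x \<bullet> h) = (\<lambda>h. A (x - wstar) \<bullet> h)"
      using grad d has_derivative_unique by blast
    then have "gradF x \<bullet> (gradF x - A (x - wstar)) = A (x - wstar) \<bullet> (gradF x - A (x - wstar))"
      by metis
    then have "(gradF x - A (x - wstar)) \<bullet> (gradF x - A (x - wstar)) = 0"
      by (simp add: inner_diff_left)
    then show ?thesis by simp
  qed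
  have Ad: "gradF (w + d) - gradF w = A d" for d
    using gradA linear_diff[OF A_lin, of "w + d - wstar" "w - wstar"] by simp
  have Abound: "(norm (A d))\<^sup>2 \<le> L\<^sup>2 * (norm d)\<^sup>2" for d
  proof -
    have "norm (A d) \<le> L * norm d"
      using smooth Ad[of d] unfolding L_smooth_grad_def by (metis add_diff_cancel_left')
    then have "(norm (A d))\<^sup>2 \<le> (L * norm d)\<^sup>2" by (intro power_mono) auto
    then show ?thesis by (simp add: power_mult_distrib)
  qed
  have Npos: "real N > 0" using N_pos by simp
  have avg_const: "(1 / real N) *\<^sub>R (\<Sum>i<N. c) = c" for c :: 'a
    using Npos by (simp add: sum_constant_scaleR)
  show ?thesis
  proof
    show "(\<integral>\<omega>. (norm ((1 / real N) *\<^sub>R (\<Sum>i<N. gradF (H i + C i (\<omega> i) (w - H i))) - gradF w))\<^sup>2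
        \<partial>(PiM {..<N} M))
      \<le> L\<^sup>2 * omega_dwn / real N * ((1 / real N) * (\<Sum>i<N. (norm (w - H i))\<^sup>2))"
    proof -
      define M' where "M' = (\<lambda>i. if i < N then M i else return (count_space UNIV) undefined)"
      have P: "prob_space (M' i)" for i
      proof (cases "i < N")
        case True then show ?thesis using comp_rand unfolding M'_def unbiased_compressor_def by auto
      next
        case False then show ?thesis unfolding M'_def by (auto intro: prob_space_return)
      qed
      have PiEq: "PiM {..<N} M = PiM {..<N} M'" by (rule PiM_cong) (auto simp: M'_def)
      define v where "v i = w - H i" for i
      define X where "X i s = C i s (v i) - v i" for i s
      have uc: "integrable (M' i) (\<lambda>s. C i s (v i)) \<and> (\<integral>s. C i s (v i) \<partial>M' i) = v i \<and>
          integrable (M' i) (\<lambda>s. (norm (C i s (v i) - v i))\<^sup>2) \<and>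
          (\<integral>s. (norm (C i s (v i) - v i))\<^sup>2 \<partial>M' i) \<le> omega_dwn * (norm (v i))\<^sup>2" if "i < N" for i
        using comp_rand that unfolding unbiased_compressor_def M'_def by auto
      have FM: "finite_measure (M' i)" for i using P unfolding prob_space_def by blast
      have intX: "integrable (M' i) (X i)" if "i < N" for i
        unfolding X_def using uc[OF that] finite_measure.integrable_const[OF FM]
        by (intro Bochner_Integration.integrable_diff) auto
      have intN: "integrable (M' i) (\<lambda>s. (norm (X i s))\<^sup>2)" if "i < N" for i
        unfolding X_def using uc[OF that] by auto
      have mean0: "(\<integral>s. X i s \<partial>M' i) = 0" if "i < N" for i
      proof -
        have "(\<integral>s. X i s \<partial>M' i) = (\<integral>s. C i s (v i) \<partial>M' i) - (\<integral>s. v i \<partial>M' i)"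
          unfolding X_def using uc[OF that] finite_measure.integrable_const[OF FM] by (intro Bochner_Integration.integral_diff) auto
        also have "\<dots> = 0" using uc[OF that] prob_space.prob_space[OF P] by simp
        finally show ?thesis .
      qed
      note cr = cross_lemma[of M' N X, OF P intX intN mean0]
      define G where "G \<omega> = L\<^sup>2 * (1 / real N)\<^sup>2 * (\<Sum>i<N. \<Sum>j<N. X i (\<omega> i) \<bullet> X j (\<omega> j))" for \<omega>
      have pt: "(norm ((1 / real N) *\<^sub>R (\<Sum>i<N. gradF (H i + C i (\<omega> i) (w - H i))) - gradF w))\<^sup>2 \<le> G \<omega>" for \<omega>
      proof -
        have "(1 / real N) *\<^sub>R (\<Sum>i<N. gradF (H i + C i (\<omega> i) (w - H i))) - gradF w
            = (1 / real N) *\<^sub>R (\<Sum>i<N. gradF (H i + C i (\<omega> i) (w - H i))) - (1 / real N) *\<^sub>R (\<Sum>i<N. gradF w)"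
          using avg_const by simp
        also have "\<dots> = (1 / real N) *\<^sub>R (\<Sum>i<N. gradF (H i + C i (\<omega> i) (w - H i)) - gradF w)"
          by (simp add: scaleR_diff_right sum_subtractf)
        also have "\<dots> = (1 / real N) *\<^sub>R (\<Sum>i<N. A (X i (\<omega> i)))"
        proof -
          have "H i + C i (\<omega> i) (w - H i) = w + X i (\<omega> i)" for i
            unfolding X_def v_def by (simp add: algebra_simps)
          then show ?thesis using Ad by simp
        qed
        also have "\<dots> = A ((1 / real N) *\<^sub>R (\<Sum>i<N. X i (\<omega> i)))"
          using linear_sum[OF A_lin, of "\<lambda>i. X i (\<omega> i)" "{..<N}"] linear_scale[OF A_lin] by simp
        finally have e1: "(1 / real N) *\<^sub>R (\<Sum>i<N. gradF (H i + C i (\<omega> i) (w - H i))) - gradF w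
            = A ((1 / real N) *\<^sub>R (\<Sum>i<N. X i (\<omega> i)))" .
        have e2: "(norm ((1 / real N) *\<^sub>R (\<Sum>i<N. X i (\<omega> i))))\<^sup>2
            = (1 / real N)\<^sup>2 * (\<Sum>i<N. \<Sum>j<N. X i (\<omega> i) \<bullet> X j (\<omega> j))"
        proof -
          have "(norm (\<Sum>i<N. X i (\<omega> i)))\<^sup>2 = (\<Sum>i<N. X i (\<omega> i)) \<bullet> (\<Sum>j<N. X j (\<omega> j))"
            by (simp add: power2_norm_eq_inner)
          also have "\<dots> = (\<Sum>i<N. \<Sum>j<N. X i (\<omega> i) \<bullet> X j (\<omega> j))"
            by (simp add: inner_sum_left inner_sum_right) (rule sum.swap)
          finally show ?thesis by (simp add: power_divide)
        qed
        show ?thesis unfolding e1 G_def using Abound[of "(1 / real N) *\<^sub>R (\<Sum>i<N. X i (\<omega> i))"] e2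
          by (simp add: mult.assoc)
      qed
      have intG: "integrable (PiM {..<N} M') G"
      proof -
        have "integrable (PiM {..<N} M') (\<lambda>\<omega>. \<Sum>i<N. \<Sum>j<N. X i (\<omega> i) \<bullet> X j (\<omega> j))"
          using cr by (intro Bochner_Integration.integrable_sum) auto
        then show ?thesis unfolding G_def by (rule integrable_mult_right)
      qed
      have EG: "(\<integral>\<omega>. G \<omega> \<partial>PiM {..<N} M') = L\<^sup>2 * (1 / real N)\<^sup>2 * (\<Sum>i<N. \<integral>s. (norm (X i s))\<^sup>2 \<partial>M' i)"
      proof -
        have "(\<integral>\<omega>. G \<omega> \<partial>PiM {..<N} M') = L\<^sup>2 * (1 / real N)\<^sup>2 * (\<Sum>i<N. \<Sum>j<N. \<integral>\<omega>. X i (\<omega> i) \<bullet> X j (\<omega> j) \<partial>PiM {..<N} M')"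
        proof -
          have "(\<integral>\<omega>. (\<Sum>i<N. \<Sum>j<N. X i (\<omega> i) \<bullet> X j (\<omega> j)) \<partial>PiM {..<N} M')
              = (\<Sum>i<N. \<integral>\<omega>. (\<Sum>j<N. X i (\<omega> i) \<bullet> X j (\<omega> j)) \<partial>PiM {..<N} M')"
            using cr by (intro Bochner_Integration.integral_sum Bochner_Integration.integrable_sum) auto
          also have "\<dots> = (\<Sum>i<N. \<Sum>j<N. \<integral>\<omega>. X i (\<omega> i) \<bullet> X j (\<omega> j) \<partial>PiM {..<N} M')"
            using cr by (intro sum.cong refl Bochner_Integration.integral_sum) auto
          finally show ?thesis unfolding G_def by simp
        qed
        also have "\<dots> = L\<^sup>2 * (1 / real N)\<^sup>2 * (\<Sum>i<N. \<Sum>j<N. if i = j then (\<integral>s. (norm (X i s))\<^sup>2 \<partial>M' i) else 0)"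
          using cr by (intro arg_cong[where f="\<lambda>t. L\<^sup>2 * (1 / real N)\<^sup>2 * t"] sum.cong) auto
        also have "\<dots> = L\<^sup>2 * (1 / real N)\<^sup>2 * (\<Sum>i<N. \<integral>s. (norm (X i s))\<^sup>2 \<partial>M' i)"
          by (simp add: sum.delta)
        finally show ?thesis .
      qed
      have bndE: "(\<Sum>i<N. \<integral>s. (norm (X i s))\<^sup>2 \<partial>M' i) \<le> (\<Sum>i<N. omega_dwn * (norm (v i))\<^sup>2)"
        using uc unfolding X_def by (intro sum_mono) auto
      have rhs: "L\<^sup>2 * omega_dwn / real N * ((1 / real N) * (\<Sum>i<N. (norm (w - H i))\<^sup>2))
          = L\<^sup>2 * (1 / real N)\<^sup>2 * (\<Sum>i<N. omega_dwn * (norm (v i))\<^sup>2)"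
        unfolding v_def by (simp add: sum_distrib_left[symmetric] power2_eq_square field_simps)
      have rhs0: "0 \<le> L\<^sup>2 * omega_dwn / real N * ((1 / real N) * (\<Sum>i<N. (norm (w - H i))\<^sup>2))"
        using om_pos by (intro mult_nonneg_nonneg divide_nonneg_nonneg sum_nonneg) auto
      show ?thesis
      proof (cases "integrable (PiM {..<N} M') (\<lambda>\<omega>. (norm ((1 / real N) *\<^sub>R (\<Sum>i<N. gradF (H i + C i (\<omega> i) (w - H i))) - gradF w))\<^sup>2)")
        case True
        have "(\<integral>\<omega>. (norm ((1 / real N) *\<^sub>R (\<Sum>i<N. gradF (H i + C i (\<omega> i) (w - H i))) - gradF w))\<^sup>2 \<partial>PiM {..<N} M')
            \<le> (\<integral>\<omega>. G \<omega> \<partial>PiM {..<N} M')"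
          using True intG pt by (intro integral_mono) auto
        also have "\<dots> \<le> L\<^sup>2 * (1 / real N)\<^sup>2 * (\<Sum>i<N. omega_dwn * (norm (v i))\<^sup>2)"
          unfolding EG using bndE by (intro mult_left_mono) auto
        finally show ?thesis unfolding PiEq rhs .
      next
        case False
        then show ?thesis unfolding PiEq using rhs0 by (simp add: not_integrable_integral_eq)
      qed
    qed
  next
    define v where "v = w - Hs"
    have pt: "(norm ((1 / real N) *\<^sub>R (\<Sum>i<N. gradF (Hs + Cs s (w - Hs))) - gradF w))\<^sup>2
       \<le> L\<^sup>2 * (norm (Cs s v - v))\<^sup>2" for s
    proof -
      have "Hs + Cs s (w - Hs) = w + (Cs s v - v)" unfolding v_def by (simp add: algebra_simps)
      then show ?thesis using avg_const Ad Abound by simp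
    qed
    have cs: "integrable Ms (\<lambda>s. (norm (Cs s v - v))\<^sup>2)" "(\<integral>s. (norm (Cs s v - v))\<^sup>2 \<partial>Ms) \<le> omega_dwn * (norm v)\<^sup>2"
      using comp_shared unfolding unbiased_compressor_def by auto
    have rhs: "L\<^sup>2 * omega_dwn / 1 * ((1 / real N) * (\<Sum>i<N. (norm (w - Hs))\<^sup>2)) = L\<^sup>2 * (omega_dwn * (norm v)\<^sup>2)"
      using Npos unfolding v_def by simp
    show "(\<integral>s. (norm ((1 / real N) *\<^sub>R (\<Sum>i<N. gradF (Hs + Cs s (w - Hs))) - gradF w))\<^sup>2 \<partial>Ms)
      \<le> L\<^sup>2 * omega_dwn / 1 * ((1 / real N) * (\<Sum>i<N. (norm (w - Hs))\<^sup>2))"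
    proof (cases "integrable Ms (\<lambda>s. (norm ((1 / real N) *\<^sub>R (\<Sum>i<N. gradF (Hs + Cs s (w - Hs))) - gradF w))\<^sup>2)")
      case True
      have "(\<integral>s. (norm ((1 / real N) *\<^sub>R (\<Sum>i<N. gradF (Hs + Cs s (w - Hs))) - gradF w))\<^sup>2 \<partial>Ms)
          \<le> (\<integral>s. L\<^sup>2 * (norm (Cs s v - v))\<^sup>2 \<partial>Ms)"
        using True cs(1) pt by (intro integral_mono) auto
      also have "\<dots> = L\<^sup>2 * (\<integral>s. (norm (Cs s v - v))\<^sup>2 \<partial>Ms)" by simp
      also have "\<dots> \<le> L\<^sup>2 * (omega_dwn * (norm v)\<^sup>2)"
        using cs(2) by (intro mult_left_mono) auto
      finally show ?thesis unfolding rhs .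
    next
      case False
      then show ?thesis using rhs om_pos by (simp add: not_integrable_integral_eq)
    qed
  qed
qed

end
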